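(* Let $V$ be a real vector space of dimension $m\ge3$ with a non-degenerate symmetric inner product of arbitrary signature, and let $R$ be an algebraic curvature tensor on $V$. The following are equivalent: (1) $R$ is $1$ Osserman; (2) for every $x\in\mathcal{N}$, every $y\in V_{\mathbb{C}}$, and every $k\ge1$, $\operatorname{trace}\{\mathcal{J}_R(x+ty)^k\}=O(t^k)$ as $t\downarrow0$.
   Context: An algebraic curvature tensor is $R\in\otimes^4V^*$ with $R(x,y,z,w)=R(z,w,x,y)=-R(y,x,z,w)$ and $R(x,y,z,w)+R(y,z,x,w)+R(z,x,y,w)=0$. The Jacobi operator is defined by $(\mathcal{J}_R(x)y,w)=R(y,x,x,w)$. $R$ is $1$ Osserman if the eigenvalues of $\mathcal{J}_R(x)$ are constant on each of the pseudo-spheres $\{x\in V:(x,x)=1\}$ and $\{x\in V:(x,x)=-1\}$ (equivalently, for each $k$ there is a constant $c_k$ with $\operatorname{trace}\{\mathcal{J}_R(x)^k\}=c_k(x,x)^k$ for all $x\in V$). Everything is extended complex-multilinearly to $V_{\mathbb{C}}=V\otimes\mathbb{C}$; $\mathcal{N}=\{v\in V_{\mathbb{C}}:(v,v)=0\}$. *)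

theory Defs
  imports "HOL-Analysis.Analysis" "HOL-Library.Landau_Symbols"
begin

text \<open>The inner product is given by its Gram matrix G with respect to the standard basis;
  the curvature tensor R by its components R i j k l = R(e_i,e_j,e_k,e_l).\<close>

definition rform :: "real^'n::finite^'n \<Rightarrow> real^'n \<Rightarrow> real^'n \<Rightarrow> real" where
  "rform G x y = (\<Sum>i\<in>UNIV. \<Sum>j\<in>UNIV. G$i$j * x$i * y$j)"

definition cform :: "real^'n::finite^'n \<Rightarrow> complex^'n \<Rightarrow> complex^'n \<Rightarrow> complex" where
  "cform G x y = (\<Sum>i\<in>UNIV. \<Sum>j\<in>UNIV. complex_of_real (G$i$j) * x$i * y$j)"

definition inner_product_space :: "real^'n::finite^'n \<Rightarrow> bool" where
  "inner_product_space G \<longleftrightarrow>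
     (\<forall>x y. rform G x y = rform G y x) \<and>
     (\<forall>x. (\<forall>y. rform G x y = 0) \<longrightarrow> x = 0)"

definition rtens :: "('n::finite \<Rightarrow> 'n \<Rightarrow> 'n \<Rightarrow> 'n \<Rightarrow> real) \<Rightarrow> real^'n \<Rightarrow> real^'n \<Rightarrow> real^'n \<Rightarrow> real^'n \<Rightarrow> real" where
  "rtens R x y z w = (\<Sum>i\<in>UNIV. \<Sum>j\<in>UNIV. \<Sum>k\<in>UNIV. \<Sum>l\<in>UNIV.
       R i j k l * x$i * y$j * z$k * w$l)"

definition ctens :: "('n::finite \<Rightarrow> 'n \<Rightarrow> 'n \<Rightarrow> 'n \<Rightarrow> real) \<Rightarrow> complex^'n \<Rightarrow> complex^'n \<Rightarrow> complex^'n \<Rightarrow> complex^'n \<Rightarrow> complex" where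
  "ctens R x y z w = (\<Sum>i\<in>UNIV. \<Sum>j\<in>UNIV. \<Sum>k\<in>UNIV. \<Sum>l\<in>UNIV.
       complex_of_real (R i j k l) * x$i * y$j * z$k * w$l)"

definition alg_curv_tensor :: "('n::finite \<Rightarrow> 'n \<Rightarrow> 'n \<Rightarrow> 'n \<Rightarrow> real) \<Rightarrow> bool" where
  "alg_curv_tensor R \<longleftrightarrow>
     (\<forall>x y z w. rtens R x y z w = rtens R z w x y \<and>
                rtens R x y z w = - rtens R y x z w \<and>
                rtens R x y z w + rtens R y z x w + rtens R z x y w = 0)"

definition rjacobi :: "real^'n^'n \<Rightarrow> ('n::finite \<Rightarrow> 'n \<Rightarrow> 'n \<Rightarrow> 'n \<Rightarrow> real) \<Rightarrow> real^'n \<Rightarrow> real^'n^'n" where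
  "rjacobi G R x = (THE J. \<forall>y w. rform G (J *v y) w = rtens R y x x w)"

definition cjacobi :: "real^'n^'n \<Rightarrow> ('n::finite \<Rightarrow> 'n \<Rightarrow> 'n \<Rightarrow> 'n \<Rightarrow> real) \<Rightarrow> complex^'n \<Rightarrow> complex^'n^'n" where
  "cjacobi G R x = (THE J. \<forall>y w. cform G (J *v y) w = ctens R y x x w)"

fun mpow :: "'a::semiring_1^'n^'n \<Rightarrow> nat \<Rightarrow> 'a^'n^'n" where
  "mpow A 0 = mat 1"
| "mpow A (Suc k) = A ** mpow A k"

definition osserman1 :: "real^'n^'n \<Rightarrow> ('n::finite \<Rightarrow> 'n \<Rightarrow> 'n \<Rightarrow> 'n \<Rightarrow> real) \<Rightarrow> bool" where
  "osserman1 G R \<longleftrightarrow>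
     (\<forall>k::nat. \<exists>c::real. \<forall>x. trace (mpow (rjacobi G R x) k) = c * (rform G x x) ^ k)"

end

theory Submission
  imports Defs "HOL-Computational_Algebra.Polynomial"
begin

definition matmap :: "('a \<Rightarrow> 'b) \<Rightarrow> 'a^'n^'m \<Rightarrow> 'b^'n^'m" where
  "matmap h M = (\<chi> i j. h (M$i$j))"

lemma matmap_nth[simp]: "matmap h M $ i $ j = h (M$i$j)"
  by (simp add: matmap_def)

lemma matmap_mult:
  fixes h :: "'a::semiring_1 \<Rightarrow> 'b::semiring_1"
  assumes add: "\<And>x y. h (x+y) = h x + h y" and mul: "\<And>x y. h (x*y) = h x * h y" and z: "h 0 = 0"
  shows "matmap h ((A::'a^'k^'m) ** (B::'a^'n^'k)) = matmap h A ** matmap h B"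
proof -
  have s: "h (sum g S) = sum (\<lambda>x. h (g x)) S" for g and S :: "'k set"
    using sum_comp_morphism[of h g S, OF z add] by (simp add: o_def)
  show ?thesis
    by (simp add: vec_eq_iff matrix_matrix_mult_def s mul)
qed

lemma matmap_mat1:
  assumes "h 0 = 0" "h 1 = 1"
  shows "matmap h (mat 1) = mat 1"
  using assms by (simp add: vec_eq_iff mat_def)

lemma matmap_mpow:
  fixes h :: "'a::semiring_1 \<Rightarrow> 'b::semiring_1"
  assumes add: "\<And>x y. h (x+y) = h x + h y" and mul: "\<And>x y. h (x*y) = h x * h y" and z: "h 0 = 0" and o: "h 1 = 1"
  shows "matmap h (mpow (A::'a^'n^'n) k) = mpow (matmap h A) k"
  by (induction k) (simp_all add: matmap_mat1[OF z o] matmap_mult[OF add mul z])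

lemma matmap_trace:
  fixes h :: "'a::semiring_1 \<Rightarrow> 'b::semiring_1"
  assumes add: "\<And>x y. h (x+y) = h x + h y" and z: "h 0 = 0"
  shows "h (trace (A::'a^'n^'n)) = trace (matmap h A)"
  unfolding trace_def using sum_comp_morphism[of h "\<lambda>i. A$i$i" UNIV, OF z add] by (simp add: o_def)

definition smat :: "'a::times \<Rightarrow> 'a^'n^'m \<Rightarrow> 'a^'n^'m" where
  "smat c M = (\<chi> i j. c * M$i$j)"

lemma smat_mult_right: "smat (c::'a::comm_semiring_1) (A ** B) = A ** smat c B"
  by (simp add: smat_def matrix_matrix_mult_def vec_eq_iff sum_distrib_left algebra_simps)

lemma smat_mult_left: "smat (c::'a::comm_semiring_1) (A ** B) = smat c A ** B"
  by (simp add: smat_def matrix_matrix_mult_def vec_eq_iff sum_distrib_left algebra_simps)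

lemma smat_smat: "smat (c::'a::comm_semiring_1) (smat d A) = smat (c*d) A"
  by (simp add: smat_def vec_eq_iff algebra_simps)

lemma mpow_smat: "mpow (smat (c::'a::comm_semiring_1) (A::'a^'n^'n)) k = smat (c^k) (mpow A k)"
proof (induction k)
  case 0 then show ?case by (simp add: smat_def vec_eq_iff mat_def)
next
  case (Suc k)
  have "mpow (smat c A) (Suc k) = smat c A ** smat (c^k) (mpow A k)" by (simp add: Suc)
  also have "\<dots> = smat c (smat (c^k) (A ** mpow A k))"
    by (metis smat_mult_left smat_mult_right)
  finally show ?case by (simp add: smat_smat)
qed

lemma trace_smat: "trace (smat (c::'a::comm_semiring_1) A) = c * trace A"
  by (simp add: trace_def smat_def sum_distrib_left)


lemma sum_axis: "(\<Sum>l\<in>UNIV. (v::'a::semiring_1^'n)$l * axis j 1 $ l) = v$j"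
  by (simp add: axis_def if_distrib sum.delta' cong: if_cong)

lemma the_jac:
  fixes Gt Hm A :: "'a::field^'n^'n"
  assumes HG: "Hm ** Gt = mat 1" and GH: "Gt ** Hm = mat 1"
    and F: "\<And>J y w. F J y w = (\<Sum>l\<in>UNIV. (Gt *v (J *v y))$l * w$l)"
    and T: "\<And>y w. T y w = (\<Sum>l\<in>UNIV. (A *v y)$l * w$l)"
  shows "(THE J. \<forall>y w. F J y w = T y w) = Hm ** A"
proof (rule the_equality)
  show "\<forall>y w. F (Hm ** A) y w = T y w"
    by (simp add: F T matrix_vector_mul_assoc matrix_mul_assoc GH)
next
  fix J assume a: "\<forall>y w. F J y w = T y w"
  have "Gt *v (J *v y) = A *v y" for y
  proof -
    have "(Gt *v (J *v y))$l = (A *v y)$l" for l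
      using a[rule_format, of y "axis l 1"] by (simp add: F T sum_axis)
    then show ?thesis by (simp add: vec_eq_iff)
  qed
  then have "J *v y = (Hm ** A) *v y" for y
    by (metis HG matrix_vector_mul_assoc matrix_vector_mul_lid)
  then show "J = Hm ** A" by (simp add: matrix_eq)
qed

definition Ar :: "('n::finite \<Rightarrow> 'n \<Rightarrow> 'n \<Rightarrow> 'n \<Rightarrow> real) \<Rightarrow> real^'n \<Rightarrow> real^'n^'n" where
  "Ar R x = (\<chi> l i. \<Sum>j\<in>UNIV. \<Sum>k\<in>UNIV. R i j k l * x$j * x$k)"

definition Ac :: "('n::finite \<Rightarrow> 'n \<Rightarrow> 'n \<Rightarrow> 'n \<Rightarrow> real) \<Rightarrow> complex^'n \<Rightarrow> complex^'n^'n" where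
  "Ac R x = (\<chi> l i. \<Sum>j\<in>UNIV. \<Sum>k\<in>UNIV. complex_of_real (R i j k l) * x$j * x$k)"

lemma swap4: "(\<Sum>i\<in>A. \<Sum>j\<in>B. \<Sum>k\<in>C. \<Sum>l\<in>D. f i j k l) = (\<Sum>l\<in>D. \<Sum>i\<in>A. \<Sum>j\<in>B. \<Sum>k\<in>C. f i j k l)"
proof -
  have "(\<Sum>i\<in>A. \<Sum>j\<in>B. \<Sum>k\<in>C. \<Sum>l\<in>D. f i j k l) = (\<Sum>i\<in>A. \<Sum>j\<in>B. \<Sum>l\<in>D. \<Sum>k\<in>C. f i j k l)"
    by (intro sum.cong refl, rule sum.swap)
  also have "\<dots> = (\<Sum>i\<in>A. \<Sum>l\<in>D. \<Sum>j\<in>B. \<Sum>k\<in>C. f i j k l)"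
    by (intro sum.cong refl, rule sum.swap)
  also have "\<dots> = (\<Sum>l\<in>D. \<Sum>i\<in>A. \<Sum>j\<in>B. \<Sum>k\<in>C. f i j k l)"
    by (rule sum.swap)
  finally show ?thesis .
qed

lemma rtens_Ar: "rtens R y x x w = (\<Sum>l\<in>UNIV. (Ar R x *v y)$l * w$l)"
  unfolding rtens_def Ar_def matrix_vector_mult_def
  by (subst swap4) (simp add: sum_distrib_left sum_distrib_right mult_ac)

lemma ctens_Ac: "ctens R y x x w = (\<Sum>l\<in>UNIV. (Ac R x *v y)$l * w$l)"
  unfolding ctens_def Ac_def matrix_vector_mult_def
  by (subst swap4) (simp add: sum_distrib_left sum_distrib_right mult_ac)

lemma rform_alt: "rform G u w = (\<Sum>l\<in>UNIV. (transpose G *v u)$l * w$l)"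
  unfolding rform_def transpose_def matrix_vector_mult_def
  by (subst sum.swap) (simp add: sum_distrib_left sum_distrib_right mult_ac)

lemma cform_alt: "cform G u w = (\<Sum>l\<in>UNIV. (matmap complex_of_real (transpose G) *v u)$l * w$l)"
  unfolding cform_def transpose_def matrix_vector_mult_def matmap_def
  by (subst sum.swap) (simp add: sum_distrib_left sum_distrib_right mult_ac)


lemma inv_exists:
  assumes "inner_product_space G"
  obtains H where "H ** transpose G = mat 1" "transpose G ** H = mat 1"
proof -
  have "transpose G *v x = 0 \<Longrightarrow> x = 0" for x
    using assms unfolding inner_product_space_def by (simp add: rform_alt)
  then obtain H where "H ** transpose G = mat 1"
    using matrix_left_invertible_ker by blast
  then show ?thesis using that matrix_left_right_inverse by blast
qed

lemma rjac:
  assumes "H ** transpose G = mat 1" "transpose G ** H = mat 1"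
  shows "rjacobi G R x = H ** Ar R x"
  unfolding rjacobi_def
  by (rule the_jac[OF assms]) (simp_all add: rform_alt rtens_Ar)

lemma matmap_ofreal_mult: "matmap complex_of_real (A ** B) = matmap complex_of_real A ** matmap complex_of_real B"
  by (rule matmap_mult) auto

lemma matmap_ofreal_mat1: "matmap complex_of_real (mat 1) = mat 1"
  by (rule matmap_mat1) auto

lemma cjac:
  assumes "H ** transpose G = mat 1" "transpose G ** H = mat 1"
  shows "cjacobi G R z = matmap complex_of_real H ** Ac R z"
  unfolding cjacobi_def
  apply (rule the_jac[of _ "matmap complex_of_real (transpose G)"])
  using assms by (simp_all add: cform_alt ctens_Ac flip: matmap_ofreal_mult add: matmap_ofreal_mat1)

definition cv :: "real^'n \<Rightarrow> complex^'n" where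
  "cv x = (\<chi> i. complex_of_real (x$i))"

lemma cv_nth[simp]: "cv x $ i = complex_of_real (x$i)"
  by (simp add: cv_def)

lemma Ac_cv: "Ac R (cv x) = matmap complex_of_real (Ar R x)"
  by (simp add: Ac_def Ar_def vec_eq_iff)

definition fc :: "real^'n^'n \<Rightarrow> ('n::finite \<Rightarrow> 'n \<Rightarrow> 'n \<Rightarrow> 'n \<Rightarrow> real) \<Rightarrow> nat \<Rightarrow> complex^'n \<Rightarrow> complex" where
  "fc G R k z = trace (mpow (cjacobi G R z) k)"

definition fr :: "real^'n^'n \<Rightarrow> ('n::finite \<Rightarrow> 'n \<Rightarrow> 'n \<Rightarrow> 'n \<Rightarrow> real) \<Rightarrow> nat \<Rightarrow> real^'n \<Rightarrow> real" where
  "fr G R k x = trace (mpow (rjacobi G R x) k)"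

lemma fc_cv:
  assumes "inner_product_space G"
  shows "fc G R k (cv x) = complex_of_real (fr G R k x)"
proof -
  obtain H where H: "H ** transpose G = mat 1" "transpose G ** H = mat 1"
    using inv_exists[OF assms] by blast
  have "cjacobi G R (cv x) = matmap complex_of_real (rjacobi G R x)"
    by (simp add: cjac[OF H] rjac[OF H] Ac_cv matmap_ofreal_mult)
  then show ?thesis unfolding fc_def fr_def
    by (simp add: matmap_trace[of complex_of_real] matmap_mpow[of complex_of_real])
qed

lemma Ac_scale: "Ac R (c *s z) = smat (c^2) (Ac R z)"
  by (simp add: Ac_def smat_def vec_eq_iff sum_distrib_left power2_eq_square mult_ac)

lemma fc_homog:
  assumes "inner_product_space G"
  shows "fc G R k (c *s z) = c^(2*k) * fc G R k z"
proof -
  obtain H where H: "H ** transpose G = mat 1" "transpose G ** H = mat 1"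
    using inv_exists[OF assms] by blast
  have "cjacobi G R (c *s z) = smat (c^2) (cjacobi G R z)"
    by (simp add: cjac[OF H] Ac_scale smat_mult_right)
  then show ?thesis unfolding fc_def
    by (simp add: mpow_smat trace_smat power_mult)
qed

definition PA :: "('n::finite \<Rightarrow> 'n \<Rightarrow> 'n \<Rightarrow> 'n \<Rightarrow> real) \<Rightarrow> complex^'n \<Rightarrow> complex^'n \<Rightarrow> complex poly^'n^'n" where
  "PA R u v = (\<chi> l i. \<Sum>j\<in>UNIV. \<Sum>k\<in>UNIV. [:complex_of_real (R i j k l):] * [:u$j, v$j:] * [:u$k, v$k:])"

lemma PA_eval: "matmap (\<lambda>p. poly p t) (PA R u v) = Ac R (u + t *s v)"
  apply (simp add: PA_def Ac_def vec_eq_iff poly_sum)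
  apply (intro allI sum.cong refl)
  apply (simp add: algebra_simps)
  done

lemma PA_deg: "degree (PA R u v $ i $ j) \<le> 2"
  unfolding PA_def vec_lambda_beta
  apply (rule degree_sum_le, simp)+
  apply (rule order.trans[OF degree_mult_le])
  apply (rule order.trans[OF add_mono[OF degree_mult_le order.refl]])
  apply (simp only: degree_pCons_eq_if degree_0 pCons_0_0 split: if_split)
  apply auto
  done

lemma mult_deg:
  fixes A B :: "'a::comm_semiring_1 poly^'n^'n"
  assumes "\<And>i j. degree (A$i$j) \<le> a" "\<And>i j. degree (B$i$j) \<le> b"
  shows "degree ((A ** B)$i$j) \<le> a + b"
  unfolding matrix_matrix_mult_def
  apply simp
  apply (rule degree_sum_le, simp)
  apply (rule order.trans[OF degree_mult_le])
  using assms by (simp add: add_mono)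

lemma mpow_deg:
  fixes A :: "'a::comm_semiring_1 poly^'n^'n"
  assumes "\<And>i j. degree (A$i$j) \<le> a"
  shows "degree (mpow A k $i$j) \<le> a * k"
proof (induction k arbitrary: i j)
  case 0 then show ?case by (simp add: mat_def)
next
  case (Suc k)
  have "degree ((A ** mpow A k)$i$j) \<le> a + a * k"
    by (rule mult_deg[OF assms Suc])
  then show ?case by simp
qed

lemma poly_hom_add: "poly (p + q) t = poly p t + poly q t" by simp
lemma poly_hom_mult: "poly (p * q) t = poly p t * poly q t" by simp

lemma linef:
  assumes "inner_product_space G"
  shows "\<exists>p. degree p \<le> 2*k \<and> (\<forall>t. fc G R k (u + t *s v) = poly p t)"
proof -
  obtain H where H: "H ** transpose G = mat 1" "transpose G ** H = mat 1"
    using inv_exists[OF assms] by blast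
  define PJ where "PJ = matmap (\<lambda>c. [:c:]) (matmap complex_of_real H) ** PA R u v"
  have mm: "matmap (\<lambda>p. poly p t) (matmap (\<lambda>c. [:c:]) X) = X" for t and X :: "complex^'n^'n"
    by (simp add: vec_eq_iff)
  have ev: "matmap (\<lambda>p. poly p t) PJ = cjacobi G R (u + t *s v)" for t
    unfolding PJ_def cjac[OF H]
    by (subst matmap_mult[of "\<lambda>p. poly p t"]) (simp_all add: PA_eval mm)
  have dPJ: "degree (PJ $ i $ j) \<le> 2" for i j
    unfolding PJ_def using mult_deg[of "matmap (\<lambda>c. [:c:]) (matmap complex_of_real H)" 0 "PA R u v" 2, OF _ PA_deg] by (simp add: numeral_2_eq_2)
  define p where "p = trace (mpow PJ k)"
  have "degree p \<le> 2 * k"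
    unfolding p_def trace_def
    by (rule degree_sum_le) (use mpow_deg[OF dPJ] in auto)
  moreover have "fc G R k (u + t *s v) = poly p t" for t
    unfolding fc_def p_def
    by (simp add: matmap_trace[of "\<lambda>p. poly p t"] matmap_mpow[of "\<lambda>p. poly p t"] ev)
  ultimately show ?thesis by blast
qed


lemma cform_add1: "cform G (a + b) w = cform G a w + cform G b w"
  by (simp add: cform_def algebra_simps sum.distrib)
lemma cform_add2: "cform G w (a + b) = cform G w a + cform G w b"
  by (simp add: cform_def algebra_simps sum.distrib)
lemma cform_scale1: "cform G (c *s a) w = c * cform G a w"
  by (simp add: cform_def algebra_simps sum_distrib_left)
lemma cform_scale2: "cform G w (c *s a) = c * cform G w a"
  by (simp add: cform_def algebra_simps sum_distrib_left)
lemma cform_neg1: "cform G (- a) w = - cform G a w"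
  by (simp add: cform_def sum_negf)
lemma cform_diff1: "cform G (a - b) w = cform G a w - cform G b w"
  by (simp add: cform_def algebra_simps sum_subtractf)
lemma cform_diff2: "cform G w (a - b) = cform G w a - cform G w b"
  by (simp add: cform_def algebra_simps sum_subtractf)

lemma rform_add1: "rform G (a + b) w = rform G a w + rform G b w"
  by (simp add: rform_def algebra_simps sum.distrib)
lemma rform_add2: "rform G w (a + b) = rform G w a + rform G w b"
  by (simp add: rform_def algebra_simps sum.distrib)
lemma rform_diff1: "rform G (a - b) w = rform G a w - rform G b w"
  by (simp add: rform_def algebra_simps sum_subtractf)
lemma rform_diff2: "rform G w (a - b) = rform G w a - rform G w b"
  by (simp add: rform_def algebra_simps sum_subtractf)

lemma rform_axis: "rform G (axis i 1) (axis j 1) = G$i$j"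
proof -
  have e: "G$a$b * axis i 1 $ a * axis j 1 $ b = (if b = j then (if a = i then G$i$j else 0) else 0)" for a b :: 'a
    by (simp add: axis_def)
  show ?thesis unfolding rform_def e by (simp add: sum.delta)
qed

lemma G_sym:
  assumes "inner_product_space G"
  shows "G$i$j = G$j$i"
  using assms unfolding inner_product_space_def by (metis rform_axis)

lemma cform_sym:
  assumes "inner_product_space G"
  shows "cform G u w = cform G w u"
  unfolding cform_def
  by (subst sum.swap) (simp add: G_sym[OF assms] mult_ac)

lemma cform_cv: "cform G (cv u) (cv w) = complex_of_real (rform G u w)"
  by (simp add: cform_def rform_def)

lemma Qline:
  assumes "inner_product_space G"
  shows "cform G (u + t *s v) (u + t *s v) = cform G u u + 2*t*cform G u v + t^2 * cform G v v"
  by (simp add: cform_add1 cform_add2 cform_scale1 cform_scale2 cform_sym[OF assms, of v u] algebra_simps power2_eq_square)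

lemma rQ_sum:
  assumes "inner_product_space G"
  shows "rform G (a + b) (a + b) = rform G a a + 2 * rform G a b + rform G b b"
  using assms unfolding inner_product_space_def
  by (simp add: rform_add1 rform_add2)

lemma rQ_diff:
  assumes "inner_product_space G"
  shows "rform G (a - b) (a - b) = rform G a a - 2 * rform G a b + rform G b b"
  using assms unfolding inner_product_space_def
  by (simp add: rform_diff1 rform_diff2)


lemma bigO_order:
  fixes p :: "complex poly"
  assumes big: "(\<lambda>u::real. poly p (a + complex_of_real u)) \<in> O[at_right 0](\<lambda>u. (complex_of_real u)^k)"
    and p0: "p \<noteq> 0"
  shows "k \<le> order a p"
proof (rule ccontr)
  assume "\<not> k \<le> order a p"
  define j where "j = order a p"
  then have jk: "j < k" using \<open>\<not> k \<le> order a p\<close> by simp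
  obtain q where pq: "p = [:-a,1:]^j * q" and nq: "\<not> [:-a,1:] dvd q"
    using order_decomp[OF p0, of a] j_def by blast
  have qa: "poly q a \<noteq> 0" using nq poly_eq_0_iff_dvd by blast
  obtain c where c: "c > 0" "eventually (\<lambda>u. norm (poly p (a + complex_of_real u)) \<le> c * norm ((complex_of_real u)^k)) (at_right (0::real))"
    using big by (elim landau_o.bigE)
  have ev: "eventually (\<lambda>u. norm (poly q (a + complex_of_real u)) \<le> c * u^(k-j)) (at_right (0::real))"
    using c(2) eventually_at_right_less[of "0::real"]
  proof eventually_elim
    case (elim u)
    have e1: "norm (poly p (a + complex_of_real u)) = u^j * norm (poly q (a + complex_of_real u))"
      using elim(2) by (simp add: pq norm_mult norm_power)
    have e2: "c * norm ((complex_of_real u)^k) = u^j * (c * u^(k-j))"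
      using elim(2) jk by (simp add: norm_power power_add[symmetric])
    have "u^j * norm (poly q (a + complex_of_real u)) \<le> u^j * (c * u^(k-j))"
      using elim(1) e1 e2 by simp
    then show ?case using elim(2) by (simp add: mult_le_cancel_left)
  qed
  have t1: "((\<lambda>u. norm (poly q (a + complex_of_real u))) \<longlongrightarrow> norm (poly q a)) (at_right (0::real))"
  proof -
    have "((\<lambda>u::real. a + complex_of_real u) \<longlongrightarrow> a + complex_of_real 0) (at_right 0)"
      by (intro tendsto_intros)
    then have "((\<lambda>u. norm (poly q (a + complex_of_real u))) \<longlongrightarrow> norm (poly q (a + complex_of_real 0))) (at_right (0::real))"
      by (intro tendsto_intros)
    then show ?thesis by simp
  qed
  have t2: "((\<lambda>u::real. c * u^(k-j)) \<longlongrightarrow> 0) (at_right 0)"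
  proof -
    have "((\<lambda>u::real. c * u^(k-j)) \<longlongrightarrow> c * 0^(k-j)) (at_right 0)"
      by (intro tendsto_intros)
    then show ?thesis using jk by (simp add: power_0_left)
  qed
  have "norm (poly q a) \<le> 0"
    by (rule tendsto_le[OF _ t2 t1 ev]) simp
  then show False using qa by simp
qed

lemma bigO_dvd:
  fixes p :: "complex poly"
  assumes big: "(\<lambda>u::real. poly p (a + complex_of_real u)) \<in> O[at_right 0](\<lambda>u. (complex_of_real u)^k)"
  shows "[:-a,1:]^k dvd p"
  using bigO_order[OF big] order_divides by blast

lemma two_roots:
  fixes p :: "complex poly"
  assumes deg: "degree p \<le> 2*k" and d1: "[:-0,1:]^k dvd p" and d2: "[:-t0,1:]^k dvd p" and t0: "t0 \<noteq> 0"
  shows "\<exists>c. \<forall>t. poly p t = c * t^k * (t - t0)^k"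
proof (cases "p = 0")
  case True then show ?thesis by (intro exI[of _ 0]) simp
next
  case False
  obtain r where pr: "p = [:-0,1:]^k * r" using d1 by (elim dvdE)
  have r0: "r \<noteq> 0" using False pr by auto
  have o0: "order t0 ([:-0,1:]^k) = 0"
    by (rule order_0I) (simp add: t0)
  have "k \<le> order t0 p" using d2 False order_divides by blast
  also have "order t0 p = order t0 ([:-0,1:]^k) + order t0 r"
    using False pr order_mult by metis
  finally have "k \<le> order t0 r" using o0 by simp
  then have "[:-t0,1:]^k dvd r" using order_divides by blast
  then obtain r2 where rr: "r = [:-t0,1:]^k * r2" by (elim dvdE)
  have r20: "r2 \<noteq> 0" using r0 rr by auto
  have "degree p = k + (k + degree r2)"
    unfolding pr rr using r20
    by (simp add: degree_mult_eq degree_linear_power)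
  then have "degree r2 = 0" using deg by simp
  then obtain c where "r2 = [:c:]" by (metis degree_eq_zeroE)
  then have "poly p t = c * t^k * (t - t0)^k" for t
    unfolding pr rr by (simp add: poly_power mult_ac)
  then show ?thesis by blast
qed

lemma poly_eq_at0:
  fixes p q :: "complex poly"
  assumes "\<And>s. s \<noteq> 0 \<Longrightarrow> poly p s = poly q s"
  shows "poly p 0 = poly q 0"
proof (rule ccontr)
  assume ne: "poly p 0 \<noteq> poly q 0"
  then have "p - q \<noteq> 0" by auto
  then have fin: "finite {s. poly (p - q) s = 0}" by (rule poly_roots_finite)
  have "UNIV - {0::complex} \<subseteq> {s. poly (p - q) s = 0}" using assms by auto
  moreover have "infinite (UNIV - {0::complex})"
    by (simp add: infinite_UNIV_char_0)
  ultimately show False using fin finite_subset by blast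
qed


lemma vec_lin1: "(n + t0 *s w) + u *s w = n + (t0 + u) *s (w::complex^'n)"
  by (simp add: vec_eq_iff algebra_simps)

lemma pencil:
  fixes G :: "real^'n::finite^'n"
  assumes ip: "inner_product_space G"
    and H2: "\<And>x y. cform G x x = 0 \<Longrightarrow>
       (\<lambda>t::real. fc G R k (x + complex_of_real t *s y)) \<in> O[at_right 0](\<lambda>t. (complex_of_real t) ^ k)"
    and nn: "cform G n n = 0" and wn: "cform G w w \<noteq> 0" and bn: "cform G n w \<noteq> 0"
  shows "fc G R k (n + t *s w) * (cform G w w)^k = fc G R k w * (cform G (n + t *s w) (n + t *s w))^k"
proof -
  define Qw where "Qw = cform G w w"
  define B where "B = cform G n w"
  obtain p where degp: "degree p \<le> 2*k" and p: "\<And>t. fc G R k (n + t *s w) = poly p t"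
    using linef[OF ip] by blast
  define t0 where "t0 = - 2 * B / Qw"
  have t0nz: "t0 \<noteq> 0" using bn wn by (simp add: t0_def B_def Qw_def)
  have Qt0: "Qw * t0 = - 2 * B" using wn by (simp add: t0_def Qw_def)
  have d1: "[:-0,1:]^k dvd p"
  proof (rule bigO_dvd)
    show "(\<lambda>u::real. poly p (0 + complex_of_real u)) \<in> O[at_right 0](\<lambda>u. (complex_of_real u)^k)"
      using H2[OF nn, of w] by (simp add: p)
  qed
  have Qline_n: "cform G (n + s *s w) (n + s *s w) = s * (2 * B + s * Qw)" for s
    using Qline[OF ip, of n s w] nn by (simp add: B_def Qw_def power2_eq_square algebra_simps)
  have n0: "cform G (n + t0 *s w) (n + t0 *s w) = 0"
    unfolding Qline_n using Qt0 by (simp add: algebra_simps)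
  have d2: "[:-t0,1:]^k dvd p"
  proof (rule bigO_dvd)
    show "(\<lambda>u::real. poly p (t0 + complex_of_real u)) \<in> O[at_right 0](\<lambda>u. (complex_of_real u)^k)"
      using H2[OF n0, of w] by (simp only: p vec_lin1)
  qed
  obtain c where c: "\<And>t. poly p t = c * t^k * (t - t0)^k"
    using two_roots[OF degp d1 d2 t0nz] by blast
  obtain q where q: "\<And>s. fc G R k (w + s *s n) = poly q s"
    using linef[OF ip] by blast
  have "poly q s = poly (smult c ([:1, -t0:]^k)) s" if s: "s \<noteq> 0" for s
  proof -
    have "w + s *s n = s *s (n + (1/s) *s w)"
      using s by (simp add: vec_eq_iff algebra_simps)
    then have "poly q s = s^(2*k) * fc G R k (n + (1/s) *s w)"
      using q[of s] fc_homog[OF ip] by metis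
    also have "\<dots> = (s^k * s^k) * (c * (1/s)^k * (1/s - t0)^k)"
      by (simp add: p c mult_2 power_add)
    also have "\<dots> = c * ((s^k * (1/s)^k) * (s^k * (1/s - t0)^k))"
      by (simp add: mult_ac)
    also have "\<dots> = c * ((s * (1/s)) ^k * (s * (1/s - t0))^k)"
      by (simp only: power_mult_distrib)
    also have "\<dots> = c * (1 - t0 * s)^k"
      using s by (simp add: algebra_simps)
    finally show ?thesis by (simp add: poly_power algebra_simps)
  qed
  then have "poly q 0 = poly (smult c ([:1, -t0:]^k)) 0"
    by (intro poly_eq_at0) auto
  then have fw: "fc G R k w = c"
    using q[of 0] by simp
  have "fc G R k (n + t *s w) * Qw^k = c * (t * (t - t0) * Qw)^k"
    by (simp add: p c power_mult_distrib mult_ac)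
  also have "t * (t - t0) * Qw = cform G (n + t *s w) (n + t *s w)"
  proof -
    have "t * (t - t0) * Qw = t * (t * Qw) - t * (Qw * t0)" by (simp add: algebra_simps)
    also have "\<dots> = t * (2*B + t*Qw)" by (simp add: Qt0 algebra_simps)
    finally show ?thesis by (simp add: Qline_n)
  qed
  finally show ?thesis by (simp add: fw Qw_def)
qed

lemma lemL:
  fixes G :: "real^'n::finite^'n"
  assumes ip: "inner_product_space G"
    and H2: "\<And>x y. cform G x x = 0 \<Longrightarrow>
       (\<lambda>t::real. fc G R k (x + complex_of_real t *s y)) \<in> O[at_right 0](\<lambda>t. (complex_of_real t) ^ k)"
    and vn: "cform G v v \<noteq> 0" and wn: "cform G w w \<noteq> 0"
    and D: "(cform G v w)^2 \<noteq> cform G v v * cform G w w"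
  shows "fc G R k v * (cform G w w)^k = fc G R k w * (cform G v v)^k"
proof -
  define Qv Qw B where "Qv = cform G v v" and "Qw = cform G w w" and "B = cform G v w"
  define r where "r = csqrt (B^2 - Qv * Qw)"
  have r2: "r^2 = B^2 - Qv * Qw" by (simp add: r_def)
  have rnz: "r \<noteq> 0" using r2 D by (auto simp: B_def Qv_def Qw_def)
  define t where "t = (B + r) / Qw"
  have Qwnz: "Qw \<noteq> 0" using wn Qw_def by simp
  have tQ: "t * Qw = B + r" using Qwnz by (simp add: t_def)
  define n where "n = v + (-t) *s w"
  have Qn: "cform G n n = Qv - 2 * t * B + t^2 * Qw"
    unfolding n_def Qline[OF ip] by (simp add: Qv_def Qw_def B_def)
  have "Qw * (Qv - 2 * t * B + t^2 * Qw) = Qv * Qw - 2 * (t * Qw) * B + (t * Qw)^2"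
    by (simp add: algebra_simps power2_eq_square)
  also have "\<dots> = 0" unfolding tQ using r2 by (simp add: algebra_simps power2_eq_square)
  finally have nn: "cform G n n = 0" using Qwnz Qn by simp
  have "cform G n w = B - t * Qw"
    unfolding n_def by (simp add: cform_add1 cform_diff1 cform_scale1 B_def Qw_def)
  then have bn: "cform G n w \<noteq> 0" using tQ rnz by simp
  have nv: "n + t *s w = v" unfolding n_def by (simp add: vec_eq_iff)
  show ?thesis using pencil[OF ip H2 nn wn bn, of t] by (simp add: nv)
qed


definition linepoly :: "(complex^'n \<Rightarrow> complex) \<Rightarrow> bool" where
  "linepoly P \<longleftrightarrow> (\<forall>a b. \<exists>p. \<forall>s. P (a + s *s b) = poly p s)"

lemma lp_Q:
  fixes G :: "real^'n::finite^'n"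
  assumes ip: "inner_product_space G"
  shows "linepoly (\<lambda>z. cform G z z)"
  unfolding linepoly_def
proof (intro allI)
  fix a b :: "complex^'n"
  show "\<exists>p. \<forall>s. cform G (a + s *s b) (a + s *s b) = poly p s"
    by (intro exI[of _ "[:cform G a a, 2 * cform G a b, cform G b b:]"])
       (simp add: Qline[OF ip] algebra_simps power2_eq_square)
qed

lemma lp_B: "linepoly (\<lambda>z. cform (G::real^'n::finite^'n) x z)"
  unfolding linepoly_def
proof (intro allI)
  fix a b :: "complex^'n"
  show "\<exists>p. \<forall>s. cform G x (a + s *s b) = poly p s"
    by (intro exI[of _ "[:cform G x a, cform G x b:]"])
       (simp add: cform_add2 cform_scale2)
qed

lemma lp_const: "linepoly (\<lambda>z. c)"
  unfolding linepoly_def by (auto intro: exI[of _ "[:c:]"])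

lemma lp_mult: "linepoly P \<Longrightarrow> linepoly Q \<Longrightarrow> linepoly (\<lambda>z. P z * Q z)"
  unfolding linepoly_def by (metis poly_mult)

lemma lp_diff: "linepoly P \<Longrightarrow> linepoly Q \<Longrightarrow> linepoly (\<lambda>z. P z - Q z)"
  unfolding linepoly_def by (metis poly_diff)

lemma lp_nz:
  assumes "linepoly P" "linepoly Q" "P a \<noteq> 0" "Q b \<noteq> 0"
  shows "\<exists>z. P z * Q z \<noteq> 0"
proof -
  obtain p where p: "\<And>s. P (a + s *s (b - a)) = poly p s" using assms(1) unfolding linepoly_def by blast
  obtain q where q: "\<And>s. Q (a + s *s (b - a)) = poly q s" using assms(2) unfolding linepoly_def by blast
  have p0: "p \<noteq> 0" using p[of 0] assms(3) by auto
  have "a + 1 *s (b - a) = b" by (simp add: vec_eq_iff)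
  then have q0: "q \<noteq> 0" using q[of 1] assms(4) by auto
  have "finite {s. poly (p * q) s = 0}" using p0 q0 by (intro poly_roots_finite) simp
  moreover have "infinite (UNIV :: complex set)" by (simp add: infinite_UNIV_char_0)
  ultimately obtain s where "poly (p * q) s \<noteq> 0"
    by (metis (mono_tags, lifting) UNIV_I mem_Collect_eq subsetI finite_subset)
  then show ?thesis using p q by (metis poly_mult)
qed

lemma exists_orth:
  fixes G :: "real^'n::finite^'n"
  assumes "CARD('n) \<ge> 2"
  obtains a where "a \<noteq> 0" "rform G x a = 0"
proof -
  have "2 \<le> DIM(real^'n)" using assms by simp
  then obtain a where "a \<noteq> 0" "orthogonal (transpose G *v x) a"
    using orthogonal_to_vector_exists by blast
  moreover have "rform G x a = inner (transpose G *v x) a"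
    by (simp add: rform_alt inner_vec_def)
  ultimately show ?thesis using that orthogonal_def by metis
qed

lemma exists_D:
  fixes G :: "real^'n::finite^'n"
  assumes ip: "inner_product_space G" and card: "CARD('n) \<ge> 2" and xn: "rform G x x \<noteq> 0"
  shows "\<exists>a. (rform G x a)^2 \<noteq> rform G x x * rform G a a"
proof (rule ccontr)
  assume "\<not> ?thesis"
  then have all: "\<And>a. (rform G x a)^2 = rform G x x * rform G a a" by blast
  obtain a0 where a0: "a0 \<noteq> 0" "rform G x a0 = 0" using exists_orth[OF card] by blast
  have "rform G a0 b = 0" for b
  proof -
    have e1: "(rform G x b)^2 = rform G x x * (rform G a0 a0 + 2 * rform G a0 b + rform G b b)"
    proof -
      have l: "rform G x (a0 + b) = rform G x b" using a0(2) rform_add2[of G x a0 b] by simp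
      show ?thesis using all[of "a0 + b"] unfolding rQ_sum[OF ip, of a0 b] l .
    qed
    have e2: "(rform G x b)^2 = rform G x x * (rform G a0 a0 - 2 * rform G a0 b + rform G b b)"
    proof -
      have l: "rform G x (a0 - b) = - rform G x b" using a0(2) rform_diff2[of G x a0 b] by simp
      show ?thesis using all[of "a0 - b"] unfolding rQ_diff[OF ip, of a0 b] l by simp
    qed
    have "rform G x x * (4 * rform G a0 b) = rform G x x * (rform G a0 a0 + 2 * rform G a0 b + rform G b b) - rform G x x * (rform G a0 a0 - 2 * rform G a0 b + rform G b b)"
      by (simp add: algebra_simps)
    then have "rform G x x * (4 * rform G a0 b) = 0" using e1 e2 by simp
    then show ?thesis using xn by simp
  qed
  then have "a0 = 0" using ip unfolding inner_product_space_def by blast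
  then show False using a0 by simp
qed

lemma exists_nonnull:
  fixes G :: "real^'n::finite^'n"
  assumes ip: "inner_product_space G"
  shows "\<exists>e. rform G e e \<noteq> 0"
proof (rule ccontr)
  assume "\<not> ?thesis"
  then have z: "\<And>e. rform G e e = 0" by blast
  have "rform G a b = 0" for a b
    using rQ_sum[OF ip, of a b] z by simp
  then have "(axis (undefined::'n) (1::real)) = 0" using ip unfolding inner_product_space_def by blast
  then show False by (simp add: axis_eq_0_iff)
qed


lemma dir2:
  fixes G :: "real^'n::finite^'n" and R :: "'n \<Rightarrow> 'n \<Rightarrow> 'n \<Rightarrow> 'n \<Rightarrow> real"
  assumes card: "CARD('n) \<ge> 3" and ip: "inner_product_space G"
    and H2: "\<forall>x y :: complex^'n. \<forall>k::nat. cform G x x = 0 \<longrightarrow> k \<ge> 1 \<longrightarrow>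
       (\<lambda>t::real. fc G R k (x + complex_of_real t *s y)) \<in> O[at_right 0](\<lambda>t. (complex_of_real t) ^ k)"
  shows "osserman1 G R"
  unfolding osserman1_def
proof
  fix k :: nat
  show "\<exists>c. \<forall>x. trace (mpow (rjacobi G R x) k) = c * rform G x x ^ k"
  proof (cases "k = 0")
    case True
    then show ?thesis by (intro exI[of _ "real CARD('n)"]) (simp add: trace_I)
  next
    case False
    then have k1: "k \<ge> 1" by simp
    have H2k: "\<And>x y. cform G x x = 0 \<Longrightarrow>
       (\<lambda>t::real. fc G R k (x + complex_of_real t *s y)) \<in> O[at_right 0](\<lambda>t. (complex_of_real t) ^ k)"
      using H2 k1 by blast
    have card2: "CARD('n) \<ge> 2" using card by simp
    obtain e where en: "rform G e e \<noteq> 0" using exists_nonnull[OF ip] by blast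
    define c where "c = fr G R k e / (rform G e e)^k"
    have "fr G R k x = c * rform G x x ^ k" for x
    proof (cases "rform G x x = 0")
      case True
      have "fc G R k (cv x) = 0"
      proof (rule ccontr)
        assume ne: "fc G R k (cv x) \<noteq> 0"
        have "cform G (cv x) (cv x) = 0" using True by (simp add: cform_cv)
        from H2k[OF this, of 0]
        have "(\<lambda>t::real. poly [:fc G R k (cv x):] (0 + complex_of_real t)) \<in> O[at_right 0](\<lambda>t. (complex_of_real t) ^ k)"
          by simp
        from bigO_order[OF this] ne have "k \<le> order 0 [:fc G R k (cv x):]" by simp
        moreover have "order 0 [:fc G R k (cv x):] = 0" using ne by (intro order_0I) simp
        ultimately show False using k1 by simp
      qed
      then have "fr G R k x = 0" using fc_cv[OF ip] by simp
      then show ?thesis using True k1 by simp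
    next
      case xn: False
      define X where "X = cv x"
      define E where "E = cv e"
      define DX where "DX = (\<lambda>z. cform G X z * cform G X z - cform G X X * cform G z z)"
      define DE where "DE = (\<lambda>z. cform G E z * cform G E z - cform G E E * cform G z z)"
      define Q where "Q = (\<lambda>z. cform G z z)"
      have lQ: "linepoly Q" unfolding Q_def by (rule lp_Q[OF ip])
      have lDX: "linepoly DX" unfolding DX_def by (intro lp_diff lp_mult lp_B lp_const lp_Q[OF ip])
      have lDE: "linepoly DE" unfolding DE_def by (intro lp_diff lp_mult lp_B lp_const lp_Q[OF ip])
      obtain a where a: "(rform G x a)^2 \<noteq> rform G x x * rform G a a" using exists_D[OF ip card2 xn] by blast
      obtain b where b: "(rform G e b)^2 \<noteq> rform G e e * rform G b b" using exists_D[OF ip card2 en] by blast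
      have DXa: "DX (cv a) \<noteq> 0"
      proof
        assume "DX (cv a) = 0"
        then have "complex_of_real ((rform G x a)^2 - rform G x x * rform G a a) = 0"
          by (simp add: DX_def X_def cform_cv power2_eq_square)
        then have "complex_of_real ((rform G x a)^2) = complex_of_real (rform G x x * rform G a a)" by simp
        then show False using a by (simp only: of_real_eq_iff)
      qed
      have DEb: "DE (cv b) \<noteq> 0"
      proof
        assume "DE (cv b) = 0"
        then have "complex_of_real ((rform G e b)^2 - rform G e e * rform G b b) = 0"
          by (simp add: DE_def E_def cform_cv power2_eq_square)
        then have "complex_of_real ((rform G e b)^2) = complex_of_real (rform G e e * rform G b b)" by simp
        then show False using b by (simp only: of_real_eq_iff)
      qed
      have QX: "Q X \<noteq> 0" using xn by (simp add: Q_def X_def cform_cv)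
      have QE: "Q E \<noteq> 0" using en by (simp add: Q_def E_def cform_cv)
      obtain z1 where "Q z1 * DX z1 \<noteq> 0" using lp_nz[OF lQ lDX QX DXa] by blast
      then obtain z where z: "Q z * DX z * DE z \<noteq> 0" using lp_nz[OF lp_mult[OF lQ lDX] lDE _ DEb] by blast
      have Qz: "Q z \<noteq> 0" and DXz: "DX z \<noteq> 0" and DEz: "DE z \<noteq> 0" using z by auto
      have L1: "fc G R k X * (Q z)^k = fc G R k z * (Q X)^k"
        unfolding Q_def
        by (rule lemL[OF ip H2k]) (use QX Qz DXz in \<open>simp_all add: Q_def DX_def power2_eq_square\<close>)
      have L2: "fc G R k E * (Q z)^k = fc G R k z * (Q E)^k"
        unfolding Q_def
        by (rule lemL[OF ip H2k]) (use QE Qz DEz in \<open>simp_all add: Q_def DE_def power2_eq_square\<close>)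
      have "(fc G R k X * (Q E)^k) * (Q z)^k = (fc G R k E * (Q X)^k) * (Q z)^k"
        using L1 L2 by (metis mult.commute mult.left_commute)
      then have "fc G R k X * (Q E)^k = fc G R k E * (Q X)^k" using Qz by simp
      then have "complex_of_real (fr G R k x * (rform G e e)^k) = complex_of_real (fr G R k e * (rform G x x)^k)"
        by (simp add: X_def E_def Q_def fc_cv[OF ip] cform_cv)
      then have "fr G R k x * (rform G e e)^k = fr G R k e * (rform G x x)^k"
        using of_real_eq_iff by blast
      then show ?thesis using en by (simp add: c_def field_simps)
    qed
    then show ?thesis unfolding fr_def by blast
  qed
qed


lemma fc_all:
  fixes G :: "real^'n::finite^'n"
  assumes ip: "inner_product_space G" and c: "\<And>x. fr G R k x = c * rform G x x ^ k"
  shows "fc G R k z = complex_of_real c * (cform G z z)^k"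
proof -
  define a where "a = (\<chi> i. Re (z$i))"
  define b where "b = (\<chi> i. Im (z$i))"
  obtain p where p: "\<And>s. fc G R k (cv a + s *s cv b) = poly p s" using linef[OF ip] by blast
  define q2 where "q2 = smult (complex_of_real c) ([:cform G (cv a) (cv a), 2 * cform G (cv a) (cv b), cform G (cv b) (cv b):]^k)"
  have q2: "poly q2 s = complex_of_real c * (cform G (cv a + s *s cv b) (cv a + s *s cv b))^k" for s
    by (simp add: q2_def poly_power Qline[OF ip] algebra_simps power2_eq_square)
  have "poly p (complex_of_real s) = poly q2 (complex_of_real s)" for s
  proof -
    have e: "cv a + complex_of_real s *s cv b = cv (a + s *s b)" by (simp add: vec_eq_iff)
    show ?thesis
      unfolding p[symmetric] q2 e fc_cv[OF ip] c cform_cv by simp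
  qed
  have "p = q2"
  proof (rule ccontr)
    assume "p \<noteq> q2"
    then have "p - q2 \<noteq> 0" by simp
    then have fin: "finite {s. poly (p - q2) s = 0}" by (rule poly_roots_finite)
    have "range complex_of_real \<subseteq> {s. poly (p - q2) s = 0}"
      using \<open>\<And>s. poly p (complex_of_real s) = poly q2 (complex_of_real s)\<close> by auto
    moreover have "infinite (range complex_of_real)"
      using finite_imageD[of complex_of_real "UNIV::real set"] inj_of_real infinite_UNIV_char_0 by blast
    ultimately show False using fin finite_subset by blast
  qed
  have zab: "z = cv a + \<i> *s cv b"
    unfolding vec_eq_iff a_def b_def by (simp add: complex_eq[symmetric] mult.commute)
  show ?thesis using p[of \<i>] q2[of \<i>] \<open>p = q2\<close> zab by simp
qed

lemma dir1:
  fixes G :: "real^'n::finite^'n"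
  assumes ip: "inner_product_space G" and oss: "osserman1 G R"
    and xn: "cform G x x = 0"
  shows "(\<lambda>t::real. fc G R k (x + complex_of_real t *s y)) \<in> O[at_right 0](\<lambda>t. (complex_of_real t) ^ k)"
proof -
  obtain c where c: "\<And>x. fr G R k x = c * rform G x x ^ k"
    using oss unfolding osserman1_def fr_def by blast
  define B where "B = cform G x y"
  define Qy where "Qy = cform G y y"
  have f: "fc G R k (x + complex_of_real t *s y) = complex_of_real c * (complex_of_real t)^k * (2 * B + complex_of_real t * Qy)^k" for t
    unfolding fc_all[OF ip c] Qline[OF ip] xn B_def Qy_def
    by (simp add: power_mult_distrib[symmetric] power2_eq_square algebra_simps)
  show ?thesis
  proof (rule bigoI[where c = "norm c * (2 * norm B + norm Qy)^k"])
    show "\<forall>\<^sub>F t in at_right 0. norm (fc G R k (x + complex_of_real t *s y)) \<le> norm c * (2 * norm B + norm Qy)^k * norm ((complex_of_real t)^k)"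
      using eventually_at_right_real[of "0::real" 1, OF zero_less_one]
    proof eventually_elim
      case (elim t)
      then have t: "0 < t" "t < 1" by auto
      have "norm (2 * B + complex_of_real t * Qy) \<le> 2 * norm B + t * norm Qy"
        using t norm_triangle_ineq[of "2*B" "complex_of_real t * Qy"] by (simp add: norm_mult)
      also have "\<dots> \<le> 2 * norm B + norm Qy"
        using t mult_left_le_one_le[of "norm Qy" t] by simp
      finally have n: "norm (2 * B + complex_of_real t * Qy) ^ k \<le> (2 * norm B + norm Qy)^k"
        by (intro power_mono) simp_all
      show ?case unfolding f
        using mult_left_mono[OF n, of "norm c * t^k"] t
        by (simp add: norm_mult norm_power mult_ac)
    qed
  qed
qed

theorem lemma2p2:
  fixes G :: "real^'n^'n" and R :: "'n \<Rightarrow> 'n \<Rightarrow> 'n \<Rightarrow> 'n \<Rightarrow> real"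
  assumes "CARD('n) \<ge> 3"
    and "inner_product_space G"
    and "alg_curv_tensor R"
  shows "osserman1 G R \<longleftrightarrow>
    (\<forall>x y :: complex^'n. \<forall>k::nat. cform G x x = 0 \<longrightarrow> k \<ge> 1 \<longrightarrow>
       (\<lambda>t::real. trace (mpow (cjacobi G R (x + complex_of_real t *s y)) k))
         \<in> O[at_right 0](\<lambda>t. (complex_of_real t) ^ k))"
  using dir1[OF assms(2)] dir2[OF assms(1,2)] unfolding fc_def by blast

end
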